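(* Let $f=f(x_1,\ldots,x_n)$ be a positive Boolean function with exactly $k\ge 0$ relevant variables. Then the number $r(f)$ of extremal points of $f$ satisfies $r(f)\ge k+1$. Moreover, $r(f)=k+1$ if and only if $f$ is linear read-once.
   Context: Let $B=\{0,1\}$. For $\mathbf{x},\mathbf{y}\in B^n$, write $\mathbf{x}\preceq\mathbf{y}$ if $(\mathbf{x})_i=1$ implies $(\mathbf{y})_i=1$ for all $i$. A Boolean function $f$ on $B^n$ is positive if $f(\mathbf{x})=1$ and $\mathbf{x}\preceq\mathbf{y}$ imply $f(\mathbf{y})=1$. A maximal zero of $f$ is a $\preceq$-maximal point of $f^{-1}(0)$; a minimal one is a $\preceq$-minimal point of $f^{-1}(1)$; extremal points are the maximal zeros and minimal ones, and $r(f)$ denotes their number. A variable $x_k$ is relevant for $f$ if the functions $f_{|x_k=0}$ and $f_{|x_k=1}$ (obtained by fixing $x_k$) are not identical. A function is linear read-once (lro) if it is constant or can be represented by a nested formula, defined recursively: the literals $x$ and $\overline{x}$ are nested formulas; and $x\vee t$, $x\wedge t$, $\overline{x}\vee t$, $\overline{x}\wedge t$ are nested formulas whenever $x$ is a variable and $t$ is a nested formula containing neither $x$ nor $\overline{x}$. *)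

theory Defs
  imports Main
begin

text \<open>Points of B^n are represented as functions nat => bool that are False
  outside the index range {0..<n} (so x i is the i-th coordinate, i < n).\<close>

definition cube :: "nat \<Rightarrow> (nat \<Rightarrow> bool) set" where
  "cube n = {x. \<forall>i. n \<le> i \<longrightarrow> \<not> x i}"

definition vle :: "(nat \<Rightarrow> bool) \<Rightarrow> (nat \<Rightarrow> bool) \<Rightarrow> bool" where
  "vle x y \<longleftrightarrow> (\<forall>i. x i \<longrightarrow> y i)"

definition positive :: "nat \<Rightarrow> ((nat \<Rightarrow> bool) \<Rightarrow> bool) \<Rightarrow> bool" where
  "positive n f \<longleftrightarrow> (\<forall>x\<in>cube n. \<forall>y\<in>cube n. f x \<and> vle x y \<longrightarrow> f y)"

definition max_zeros :: "nat \<Rightarrow> ((nat \<Rightarrow> bool) \<Rightarrow> bool) \<Rightarrow> (nat \<Rightarrow> bool) set" where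
  "max_zeros n f = {x\<in>cube n. \<not> f x \<and> (\<forall>y\<in>cube n. \<not> f y \<and> vle x y \<longrightarrow> y = x)}"

definition min_ones :: "nat \<Rightarrow> ((nat \<Rightarrow> bool) \<Rightarrow> bool) \<Rightarrow> (nat \<Rightarrow> bool) set" where
  "min_ones n f = {x\<in>cube n. f x \<and> (\<forall>y\<in>cube n. f y \<and> vle y x \<longrightarrow> y = x)}"

definition extremal_points :: "nat \<Rightarrow> ((nat \<Rightarrow> bool) \<Rightarrow> bool) \<Rightarrow> (nat \<Rightarrow> bool) set" where
  "extremal_points n f = max_zeros n f \<union> min_ones n f"

definition r :: "nat \<Rightarrow> ((nat \<Rightarrow> bool) \<Rightarrow> bool) \<Rightarrow> nat" where
  "r n f = card (extremal_points n f)"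

definition relevant :: "nat \<Rightarrow> ((nat \<Rightarrow> bool) \<Rightarrow> bool) \<Rightarrow> nat \<Rightarrow> bool" where
  "relevant n f k \<longleftrightarrow> k < n \<and> (\<exists>x\<in>cube n. f (x(k := False)) \<noteq> f (x(k := True)))"

definition relevant_vars :: "nat \<Rightarrow> ((nat \<Rightarrow> bool) \<Rightarrow> bool) \<Rightarrow> nat set" where
  "relevant_vars n f = {k. relevant n f k}"

datatype nformula =
    NLit nat bool
  | NOr nat bool nformula
  | NAnd nat bool nformula

fun nvars :: "nformula \<Rightarrow> nat set" where
  "nvars (NLit v p) = {v}"
| "nvars (NOr v p t) = insert v (nvars t)"
| "nvars (NAnd v p t) = insert v (nvars t)"

fun nested_ok :: "nformula \<Rightarrow> bool" where
  "nested_ok (NLit v p) = True"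
| "nested_ok (NOr v p t) = (v \<notin> nvars t \<and> nested_ok t)"
| "nested_ok (NAnd v p t) = (v \<notin> nvars t \<and> nested_ok t)"

fun lit_val :: "(nat \<Rightarrow> bool) \<Rightarrow> nat \<Rightarrow> bool \<Rightarrow> bool" where
  "lit_val x v p = (if p then x v else \<not> x v)"

fun neval :: "nformula \<Rightarrow> (nat \<Rightarrow> bool) \<Rightarrow> bool" where
  "neval (NLit v p) x = lit_val x v p"
| "neval (NOr v p t) x = (lit_val x v p \<or> neval t x)"
| "neval (NAnd v p t) x = (lit_val x v p \<and> neval t x)"

definition lro :: "nat \<Rightarrow> ((nat \<Rightarrow> bool) \<Rightarrow> bool) \<Rightarrow> bool" where
  "lro n f \<longleftrightarrow>
     (\<exists>c. \<forall>x\<in>cube n. f x = c) \<or>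
     (\<exists>\<phi>. nested_ok \<phi> \<and> nvars \<phi> \<subseteq> {..<n} \<and> (\<forall>x\<in>cube n. f x = neval \<phi> x))"

end

theory Submission
  imports Defs
begin

lemma vle_le: "vle x y \<longleftrightarrow> x \<le> y"
  by (auto simp: vle_def le_fun_def)

lemma finite_cube: "finite (cube n)"
proof -
  have "cube n \<subseteq> (\<lambda>S i. i \<in> S) ` Pow {..<n}"
  proof
    fix x assume xc: "x \<in> cube n"
    have "\<And>i. x i \<Longrightarrow> i < n" using xc by (auto simp: cube_def) (meson not_le)
    then have "x = (\<lambda>i. i \<in> {i. x i})" "{i. x i} \<in> Pow {..<n}"
      by auto
    then show "x \<in> (\<lambda>S i. i \<in> S) ` Pow {..<n}" by (rule image_eqI)
  qed
  moreover have "finite ((\<lambda>S i. i \<in> S) ` Pow {..<n})" by simp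
  ultimately show ?thesis by (rule finite_subset)
qed

lemma cube_upd[simp]: "x < n \<Longrightarrow> a \<in> cube n \<Longrightarrow> a(x:=c) \<in> cube n"
  by (auto simp: cube_def)

lemma cube_le: "a \<in> cube n \<Longrightarrow> b \<le> a \<Longrightarrow> b \<in> cube n"
  by (auto simp: cube_def le_fun_def)

lemma posD: "positive n f \<Longrightarrow> a \<in> cube n \<Longrightarrow> b \<in> cube n \<Longrightarrow> a \<le> b \<Longrightarrow> f a \<Longrightarrow> f b"
  unfolding positive_def vle_le by blast

lemma mo_iff: "m \<in> min_ones n f \<longleftrightarrow> m \<in> cube n \<and> f m \<and> (\<forall>y\<in>cube n. f y \<and> y \<le> m \<longrightarrow> y = m)"
  by (auto simp: min_ones_def vle_le)

lemma mz_iff: "m \<in> max_zeros n f \<longleftrightarrow> m \<in> cube n \<and> \<not> f m \<and> (\<forall>y\<in>cube n. \<not> f y \<and> m \<le> y \<longrightarrow> y = m)"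
  by (auto simp: max_zeros_def vle_le)

lemma ex_mo: "a \<in> cube n \<Longrightarrow> f a \<Longrightarrow> \<exists>m\<in>min_ones n f. m \<le> a"
proof -
  assume a: "a \<in> cube n" "f a"
  have fin: "finite {c \<in> cube n. f c}" using finite_cube by simp
  have "a \<in> {c \<in> cube n. f c}" using a by simp
  from finite_has_minimal2[OF fin this] obtain m where
    m: "m \<in> {c \<in> cube n. f c}" "m \<le> a" "\<forall>b\<in>{c \<in> cube n. f c}. b \<le> m \<longrightarrow> m = b" by blast
  have "m \<in> min_ones n f" unfolding mo_iff using m by blast
  then show ?thesis using m(2) by blast
qed

lemma ex_mz: "a \<in> cube n \<Longrightarrow> \<not> f a \<Longrightarrow> \<exists>m\<in>max_zeros n f. a \<le> m"
proof -
  assume a: "a \<in> cube n" "\<not> f a"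
  have fin: "finite {c \<in> cube n. \<not> f c}" using finite_cube by simp
  have "a \<in> {c \<in> cube n. \<not> f c}" using a by simp
  from finite_has_maximal2[OF fin this] obtain m where
    m: "m \<in> {c \<in> cube n. \<not> f c}" "a \<le> m" "\<forall>b\<in>{c \<in> cube n. \<not> f c}. m \<le> b \<longrightarrow> m = b" by blast
  have "m \<in> max_zeros n f" unfolding mz_iff using m by blast
  then show ?thesis using m(2) by blast
qed

lemma fin_mo: "finite (min_ones n f)" and fin_mz: "finite (max_zeros n f)"
  by (rule finite_subset[OF _ finite_cube], auto simp: min_ones_def max_zeros_def)+

lemma r_eq: "r n f = card (min_ones n f) + card (max_zeros n f)"
  unfolding r_def extremal_points_def
proof -
  have "max_zeros n f \<inter> min_ones n f = {}" by (auto simp: min_ones_def max_zeros_def)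
  then show "card (max_zeros n f \<union> min_ones n f) = card (min_ones n f) + card (max_zeros n f)"
    by (simp add: card_Un_disjoint[OF fin_mz fin_mo])
qed

lemma fin_rel: "finite (relevant_vars n f)"
  by (rule finite_subset[of _ "{..<n}"]) (auto simp: relevant_vars_def relevant_def)

definition fx :: "((nat\<Rightarrow>bool)\<Rightarrow>bool) \<Rightarrow> nat \<Rightarrow> bool \<Rightarrow> (nat\<Rightarrow>bool) \<Rightarrow> bool" where
  "fx f x c = (\<lambda>a. f (a(x:=c)))"

lemma pos_fx: "positive n f \<Longrightarrow> x < n \<Longrightarrow> positive n (fx f x c)"
  unfolding positive_def fx_def vle_def
  apply (intro ballI impI)
  subgoal for a b
    apply (drule bspec[of _ _ "a(x:=c)"], simp)
    apply (drule bspec[of _ _ "b(x:=c)"], simp)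
    by auto
  done

lemma rel_fx: "x < n \<Longrightarrow> relevant_vars n (fx f x c) \<subseteq> relevant_vars n f - {x}"
proof
  fix y assume xn: "x < n" and "y \<in> relevant_vars n (fx f x c)"
  then obtain a where a: "y < n" "a \<in> cube n" "f (a(y:=False, x:=c)) \<noteq> f (a(y:=True,x:=c))"
    by (auto simp: relevant_vars_def relevant_def fx_def)
  then have "y \<noteq> x" by auto
  then have "f ((a(x:=c))(y:=False)) \<noteq> f ((a(x:=c))(y:=True))" using a(3) by (simp add: fun_upd_twist)
  then show "y \<in> relevant_vars n f - {x}" using a xn \<open>y \<noteq> x\<close>
    by (auto simp: relevant_vars_def relevant_def)
qed

lemma le_upd: "(a::nat\<Rightarrow>bool) \<le> b \<Longrightarrow> a(x:=c) \<le> b(x:=c)"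
  by (auto simp: le_fun_def)

lemma upd_le: "a(y:=False) \<le> a" "a \<le> a(y:=True)"
  by (auto simp: le_fun_def)

lemma relE: "positive n f \<Longrightarrow> relevant n f y \<Longrightarrow>
   \<exists>a\<in>cube n. \<not> f (a(y:=False)) \<and> f (a(y:=True)) \<and> y < n"
proof -
  assume p: "positive n f" and "relevant n f y"
  then obtain a where a: "y < n" "a \<in> cube n" "f (a(y:=False)) \<noteq> f (a(y:=True))"
    by (auto simp: relevant_def)
  have "a(y:=False) \<le> a(y:=True)" by (auto simp: le_fun_def)
  then have "f (a(y:=False)) \<Longrightarrow> f (a(y:=True))" using posD[OF p, of "a(y:=False)" "a(y:=True)"] a by auto
  then show ?thesis using a by (intro bexI[of _ a]) auto
qed

lemma relI: "a \<in> cube n \<Longrightarrow> y < n \<Longrightarrow> f (a(y:=False)) \<noteq> f (a(y:=True)) \<Longrightarrow> y \<in> relevant_vars n f"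
  by (auto simp: relevant_vars_def relevant_def)

lemma rel_mo: "positive n f \<Longrightarrow> relevant n f z \<Longrightarrow> \<exists>p\<in>min_ones n f. p z"
proof -
  assume p: "positive n f" and "relevant n f z"
  from relE[OF this] obtain a where a: "a \<in> cube n" "\<not> f (a(z:=False))" "f (a(z:=True))" "z < n"
    by auto
  from ex_mo[of "a(z:=True)" n f] a obtain m where m: "m \<in> min_ones n f" "m \<le> a(z:=True)" by auto
  show ?thesis
  proof (rule ccontr)
    assume "\<not> ?thesis"
    then have "\<not> m z" using m by auto
    then have "m \<le> a(z:=False)" using m(2) by (auto simp: le_fun_def)
    then have "f (a(z:=False))" using posD[OF p, of m "a(z:=False)"] m(1) a by (auto simp: mo_iff)
    then show False using a by auto
  qed
qed

lemma keep:
  assumes h: "\<forall>a\<in>cube n. a v = c \<longrightarrow> f a = d" and v: "v < n"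
  shows "relevant_vars n f - {v} \<subseteq> relevant_vars n (fx f v (\<not> c))"
proof
  fix y assume y: "y \<in> relevant_vars n f - {v}"
  then obtain a where a: "y < n" "a \<in> cube n" "f (a(y:=False)) \<noteq> f (a(y:=True))" "y \<noteq> v"
    by (auto simp: relevant_vars_def relevant_def)
  have "a v = (\<not> c)"
  proof (rule ccontr)
    assume "a v \<noteq> (\<not> c)"
    then have "f (a(y:=False)) = d" "f (a(y:=True)) = d" using h a by auto
    then show False using a by auto
  qed
  then have "a(y:=False, v:=\<not>c) = a(y:=False)" "a(y:=True, v:=\<not>c) = a(y:=True)" using a(4)
    by (auto simp: fun_eq_iff)
  then show "y \<in> relevant_vars n (fx f v (\<not> c))" using a by (auto simp: fx_def intro!: relI)
qed

lemma key:
  assumes p: "positive n f" and ne: "relevant_vars n f \<noteq> {}"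
  shows "\<exists>x\<in>relevant_vars n f. \<exists>c. relevant_vars n (fx f x c) = relevant_vars n f - {x}"
proof -
  define V where "V = relevant_vars n f"
  define I where "I v = {m\<in>min_ones n f. m v}" for v
  have finI: "finite (I v)" for v using fin_mo[of n f] by (auto simp: I_def)
  have Vn: "y \<in> V \<Longrightarrow> y < n" for y by (auto simp: V_def relevant_vars_def relevant_def)
  define M where "M = Min ((\<lambda>v. card (I v)) ` V)"
  have "M \<in> (\<lambda>v. card (I v)) ` V" unfolding M_def
    by (rule Min_in) (use fin_rel ne in \<open>auto simp: V_def\<close>)
  then obtain x where xV: "x \<in> V" and xM: "M = card (I x)" by blast
  have xmin: "card (I x) \<le> card (I y)" if "y \<in> V" for y
    unfolding xM[symmetric] M_def using fin_rel[of n f] that by (simp add: V_def)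
  have xn: "x < n" using Vn xV by auto
  show ?thesis
  proof (cases "V - {x} \<subseteq> relevant_vars n (fx f x False)")
    case True
    then show ?thesis using rel_fx[OF xn, of f False] xV by (auto simp: V_def)
  next
    case False
    then obtain y where yV: "y \<in> V" "y \<noteq> x" and yn: "y \<notin> relevant_vars n (fx f x False)" by auto
    have yl: "y < n" using Vn yV by auto
    have sub: "I y \<subseteq> I x"
    proof
      fix m assume "m \<in> I y"
      then have m: "m \<in> min_ones n f" "m y" by (auto simp: I_def)
      have "m x"
      proof (rule ccontr)
        assume nx: "\<not> m x"
        have mc: "m \<in> cube n" using m by (auto simp: mo_iff)
        have "fx f x False (m(y:=False)) = fx f x False (m(y:=True))"
          using relI[OF mc yl, of "fx f x False"] yn by auto
        moreover have "m(y:=True, x:=False) = m" using nx m(2) by (auto simp: fun_eq_iff)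
        moreover have "m(y:=False, x:=False) = m(y:=False)" using nx by (auto simp: fun_eq_iff)
        ultimately have "f (m(y:=False))" using m by (auto simp: fx_def mo_iff)
        moreover have "m(y:=False) \<in> cube n" using mc yl by simp
        ultimately have "m(y:=False) = m" using m(1) upd_le(1)[of m y] unfolding mo_iff by blast
        then show False using m(2) by (metis fun_upd_same)
      qed
      then show "m \<in> I x" using m by (auto simp: I_def)
    qed
    have Ieq: "I y = I x" using card_subset_eq[OF finI sub] xmin[OF yV(1)] card_mono[OF finI sub] by auto
    have "V - {x} \<subseteq> relevant_vars n (fx f x True)"
    proof
      fix z assume zV: "z \<in> V - {x}"
      have zn: "z < n" using Vn zV by auto
      obtain pp where pp: "pp \<in> min_ones n f" "pp z"
        using rel_mo[OF p, of z] zV by (auto simp: V_def relevant_vars_def)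
      have pc: "pp \<in> cube n" using pp by (auto simp: mo_iff)
      have pmin: "\<And>q. q \<in> cube n \<Longrightarrow> f q \<Longrightarrow> q \<le> pp \<Longrightarrow> q = pp" using pp by (auto simp: mo_iff)
      show "z \<in> relevant_vars n (fx f x True)"
      proof (cases "pp x")
        case True
        have e1: "pp(z:=False, x:=True) = pp(z:=False)" "pp(z:=True, x:=True) = pp"
          using True pp(2) zV by (auto simp: fun_eq_iff)
        have "\<not> f (pp(z:=False))"
        proof
          assume "f (pp(z:=False))"
          moreover have "pp(z:=False) \<in> cube n" using pc zn by simp
          ultimately have "pp(z:=False) = pp" using pmin[of "pp(z:=False)"] upd_le(1)[of pp z] by blast
          then show False using pp(2) by (metis fun_upd_same)
        qed
        then show ?thesis using e1 pp relI[OF pc zn, of "fx f x True"] by (auto simp: fx_def mo_iff)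
      next
        case False
        have e1: "pp(z:=True, x:=True) = pp(x:=True)" using pp(2) by (auto simp: fun_eq_iff)
        have t: "f (pp(x:=True))" using posD[OF p pc _ upd_le(2)[of pp x]] pc xn pp by (auto simp: mo_iff)
        have "\<not> f (pp(z:=False, x:=True))"
        proof
          assume fz: "f (pp(z:=False, x:=True))"
          obtain q where q: "q \<in> min_ones n f" "q \<le> pp(z:=False, x:=True)"
            using ex_mo[of "pp(z:=False, x:=True)" n f] fz pc zn xn by auto
          show False
          proof (cases "q x")
            case True
            then have "q \<in> I x" using q(1) by (simp add: I_def)
            then have "q \<in> I y" using Ieq by simp
            then have "q y" by (auto simp: I_def)
            then have "y \<noteq> z" "pp y" using q(2) yV by (auto simp: le_fun_def split: if_splits)
            then have "pp \<in> I y" using pp(1) by (simp add: I_def)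
            then have "pp \<in> I x" using Ieq by simp
            then show False using False by (auto simp: I_def)
          next
            case False
            then have "q \<le> pp" using q(2) by (auto simp: le_fun_def split: if_splits)
            then have "q = pp" using pmin[of q] q by (auto simp: mo_iff)
            moreover have "\<not> q z" using q(2) zV unfolding le_fun_def
              by (metis DiffD2 fun_upd_other fun_upd_same insertCI le_boolD)
            ultimately show False using pp(2) by simp
          qed
        qed
        then show ?thesis using e1 t relI[OF pc zn, of "fx f x True"] by (auto simp: fx_def)
      qed
    qed
    then show ?thesis using rel_fx[OF xn, of f True] xV by (auto simp: V_def)
  qed
qed


definition cmp :: "nat \<Rightarrow> (nat \<Rightarrow> bool) \<Rightarrow> nat \<Rightarrow> bool" where
  "cmp n a = (\<lambda>i. i < n \<and> \<not> a i)"

definition dual :: "nat \<Rightarrow> ((nat\<Rightarrow>bool)\<Rightarrow>bool) \<Rightarrow> (nat\<Rightarrow>bool) \<Rightarrow> bool" where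
  "dual n f = (\<lambda>a. \<not> f (cmp n a))"

lemma cmp_cube[simp]: "cmp n a \<in> cube n"
  by (auto simp: cmp_def cube_def)

lemma cmp_cmp[simp]: "a \<in> cube n \<Longrightarrow> cmp n (cmp n a) = a"
  by (auto simp: cmp_def cube_def fun_eq_iff) (meson not_le)

lemma cmp_le: "a \<in> cube n \<Longrightarrow> b \<in> cube n \<Longrightarrow> (cmp n a \<le> cmp n b) = (b \<le> a)"
  unfolding cmp_def cube_def le_fun_def le_bool_def
  by (metis (mono_tags, lifting) mem_Collect_eq not_le)

lemma cmp_upd: "x < n \<Longrightarrow> cmp n (a(x:=c)) = (cmp n a)(x:= \<not>c)"
  by (auto simp: cmp_def fun_eq_iff)

lemma cmp_inj: "inj_on (cmp n) (cube n)"
  by (metis cmp_cmp inj_onI)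

lemma pos_dual: "positive n f \<Longrightarrow> positive n (dual n f)"
  unfolding positive_def dual_def vle_le
  by (metis cmp_cube cmp_le)

lemma mo_dual: "min_ones n (dual n f) = cmp n ` max_zeros n f"
proof
  show "min_ones n (dual n f) \<subseteq> cmp n ` max_zeros n f"
  proof
    fix m assume m: "m \<in> min_ones n (dual n f)"
    have "cmp n m \<in> max_zeros n f" unfolding mz_iff
    proof (intro conjI ballI impI)
      show "cmp n m \<in> cube n" by simp
      show "\<not> f (cmp n m)" using m by (auto simp: mo_iff dual_def)
      fix y assume y: "y \<in> cube n" "\<not> f y \<and> cmp n m \<le> y"
      have mc: "m \<in> cube n" using m by (auto simp: mo_iff)
      have "cmp n y \<le> m" using cmp_le[of y n "cmp n m"] y mc by simp
      moreover have "dual n f (cmp n y)" using y by (simp add: dual_def)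
      ultimately have "cmp n y = m" using m by (auto simp: mo_iff)
      then show "y = cmp n m" using y by auto
    qed
    moreover have "m = cmp n (cmp n m)" using m by (auto simp: mo_iff)
    ultimately show "m \<in> cmp n ` max_zeros n f" by blast
  qed
next
  show "cmp n ` max_zeros n f \<subseteq> min_ones n (dual n f)"
  proof
    fix m assume "m \<in> cmp n ` max_zeros n f"
    then obtain b where b: "b \<in> max_zeros n f" "m = cmp n b" by blast
    have bc: "b \<in> cube n" using b by (auto simp: mz_iff)
    show "m \<in> min_ones n (dual n f)" unfolding mo_iff
    proof (intro conjI ballI impI)
      show "m \<in> cube n" using b by simp
      show "dual n f m" using b bc by (auto simp: mz_iff dual_def)
      fix y assume y: "y \<in> cube n" "dual n f y \<and> y \<le> m"
      have "b \<le> cmp n y" using cmp_le[of "cmp n b" n y] y bc b by simp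
      moreover have "\<not> f (cmp n y)" using y by (simp add: dual_def)
      ultimately have "cmp n y = b" using b by (auto simp: mz_iff)
      then show "y = m" using y b by auto
    qed
  qed
qed

lemma mz_dual: "max_zeros n (dual n f) = cmp n ` min_ones n f"
proof
  show "max_zeros n (dual n f) \<subseteq> cmp n ` min_ones n f"
  proof
    fix m assume m: "m \<in> max_zeros n (dual n f)"
    have "cmp n m \<in> min_ones n f" unfolding mo_iff
    proof (intro conjI ballI impI)
      show "cmp n m \<in> cube n" by simp
      show "f (cmp n m)" using m by (auto simp: mz_iff dual_def)
      fix y assume y: "y \<in> cube n" "f y \<and> y \<le> cmp n m"
      have mc: "m \<in> cube n" using m by (auto simp: mz_iff)
      have "m \<le> cmp n y" using cmp_le[of "cmp n m" n y] y mc by simp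
      moreover have "\<not> dual n f (cmp n y)" using y by (simp add: dual_def)
      ultimately have "cmp n y = m" using m by (auto simp: mz_iff)
      then show "y = cmp n m" using y by auto
    qed
    moreover have "m = cmp n (cmp n m)" using m by (auto simp: mz_iff)
    ultimately show "m \<in> cmp n ` min_ones n f" by blast
  qed
next
  show "cmp n ` min_ones n f \<subseteq> max_zeros n (dual n f)"
  proof
    fix m assume "m \<in> cmp n ` min_ones n f"
    then obtain b where b: "b \<in> min_ones n f" "m = cmp n b" by blast
    have bc: "b \<in> cube n" using b by (auto simp: mo_iff)
    show "m \<in> max_zeros n (dual n f)" unfolding mz_iff
    proof (intro conjI ballI impI)
      show "m \<in> cube n" using b by simp
      show "\<not> dual n f m" using b bc by (auto simp: mo_iff dual_def)
      fix y assume y: "y \<in> cube n" "\<not> dual n f y \<and> m \<le> y"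
      have "cmp n y \<le> b" using cmp_le[of y n "cmp n b"] y bc b by simp
      moreover have "f (cmp n y)" using y by (simp add: dual_def)
      ultimately have "cmp n y = b" using b by (auto simp: mo_iff)
      then show "y = m" using y b by auto
    qed
  qed
qed

lemma r_dual: "r n (dual n f) = r n f"
proof -
  have i1: "inj_on (cmp n) (max_zeros n f)" using cmp_inj by (rule inj_on_subset) (auto simp: mz_iff)
  have i2: "inj_on (cmp n) (min_ones n f)" using cmp_inj by (rule inj_on_subset) (auto simp: mo_iff)
  show ?thesis unfolding r_eq mo_dual mz_dual card_image[OF i1] card_image[OF i2] by simp
qed

lemma rel_dual: "relevant_vars n (dual n f) = relevant_vars n f"
proof -
  have "relevant n (dual n f) y \<longleftrightarrow> relevant n f y" for y
  proof
    assume "relevant n (dual n f) y"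
    then obtain a where a: "y < n" "a \<in> cube n" "dual n f (a(y:=False)) \<noteq> dual n f (a(y:=True))"
      by (auto simp: relevant_def)
    then have "f ((cmp n a)(y:=True)) \<noteq> f ((cmp n a)(y:=False))" by (simp add: dual_def cmp_upd)
    then show "relevant n f y" using a by (auto simp: relevant_def)
  next
    assume "relevant n f y"
    then obtain a where a: "y < n" "a \<in> cube n" "f (a(y:=False)) \<noteq> f (a(y:=True))"
      by (auto simp: relevant_def)
    then have "dual n f ((cmp n a)(y:=True)) \<noteq> dual n f ((cmp n a)(y:=False))"
      by (simp add: dual_def cmp_upd)
    then show "relevant n (dual n f) y" using a by (auto simp: relevant_def)
  qed
  then show ?thesis by (simp add: relevant_vars_def)
qed

lemma fx_dual: "x < n \<Longrightarrow> fx (dual n f) x c = dual n (fx f x (\<not> c))"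
  by (simp add: fx_def dual_def cmp_upd fun_eq_iff)


lemma mo_fx_nx: "x < n \<Longrightarrow> a \<in> min_ones n (fx f x c) \<Longrightarrow> \<not> a x"
proof
  assume x: "x < n" and a: "a \<in> min_ones n (fx f x c)" and ax: "a x"
  have ac: "a \<in> cube n" using a by (simp add: mo_iff)
  have "fx f x c (a(x:=False))" using a by (simp add: mo_iff fx_def)
  then have "a(x:=False) = a" using a ac x upd_le(1)[of a x] unfolding mo_iff by (meson cube_upd)
  then show False using ax by (metis fun_upd_same)
qed

lemma mz_fx_x: "x < n \<Longrightarrow> b \<in> max_zeros n (fx f x c) \<Longrightarrow> b x"
proof (rule ccontr)
  assume x: "x < n" and b: "b \<in> max_zeros n (fx f x c)" and bx: "\<not> b x"
  have bc: "b \<in> cube n" using b by (simp add: mz_iff)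
  have "\<not> fx f x c (b(x:=True))" using b by (simp add: mz_iff fx_def)
  then have "b(x:=True) = b" using b bc x upd_le(2)[of b x] unfolding mz_iff by (meson cube_upd)
  then show False using bx by (metis fun_upd_same)
qed

lemma mz_fx1_sub: "x < n \<Longrightarrow> b \<in> max_zeros n (fx f x True) \<Longrightarrow> b \<in> max_zeros n f"
proof -
  assume x: "x < n" and b: "b \<in> max_zeros n (fx f x True)"
  have bx: "b x" using mz_fx_x[OF x b] .
  then have bb: "b(x:=True) = b" by (simp add: fun_upd_idem)
  show ?thesis unfolding mz_iff
  proof (intro conjI ballI impI)
    show "b \<in> cube n" using b by (simp add: mz_iff)
    show "\<not> f b" using b bb by (simp add: mz_iff fx_def)
    fix y assume y: "y \<in> cube n" "\<not> f y \<and> b \<le> y"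
    then have "y x" using bx by (auto simp: le_fun_def)
    then have "y(x:=True) = y" by (simp add: fun_upd_idem)
    then have "\<not> fx f x True y" using y by (simp add: fx_def)
    then show "y = b" using b y unfolding mz_iff by blast
  qed
qed

lemma mo_fx1_map:
  assumes p: "positive n f" and x: "x < n" and a: "a \<in> min_ones n (fx f x True)"
  shows "(if f a then a else a(x:=True)) \<in> min_ones n f"
proof -
  have ac: "a \<in> cube n" using a by (simp add: mo_iff)
  have ax: "\<not> a x" using mo_fx_nx[OF x a] .
  have g: "f (a(x:=True))" using a by (simp add: mo_iff fx_def)
  have amin0: "\<forall>y\<in>cube n. fx f x True y \<and> y \<le> a \<longrightarrow> y = a" using a by (simp add: mo_iff)
  have amin: "c = a" if "c \<in> cube n" "f (c(x:=True))" "c \<le> a" for c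
    using amin0 that by (simp add: fx_def)
  show ?thesis
  proof (cases "f a")
    case True
    have "a \<in> min_ones n f" unfolding mo_iff
    proof (intro conjI ballI impI)
      show "a \<in> cube n" "f a" using ac True by auto
      fix c assume c: "c \<in> cube n" "f c \<and> c \<le> a"
      have "f (c(x:=True))" using posD[OF p c(1) _ upd_le(2)[of c x]] c x by simp
      then show "c = a" using amin c by blast
    qed
    then show ?thesis using True by simp
  next
    case False
    have "a(x:=True) \<in> min_ones n f" unfolding mo_iff
    proof (intro conjI ballI impI)
      show "a(x:=True) \<in> cube n" "f (a(x:=True))" using ac x g by auto
      fix c assume c: "c \<in> cube n" "f c \<and> c \<le> a(x:=True)"
      have c1: "c(x:=False) \<le> a" using c(2) ax by (auto simp: le_fun_def)
      have "f (c(x:=False,x:=True))" using posD[OF p c(1) _ upd_le(2)[of c x]] c x by simp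
      moreover have "c(x:=False) \<in> cube n" using c x by simp
      ultimately have ca: "c(x:=False) = a" using amin[of "c(x:=False)"] c1 by simp
      show "c = a(x:=True)"
      proof (cases "c x")
        case True
        then have "c = (c(x:=False))(x:=True)" by (simp add: fun_eq_iff)
        then show ?thesis using ca by simp
      next
        case False
        then have "c = c(x:=False)" by (simp add: fun_eq_iff)
        then have "c = a" using ca by simp
        then show ?thesis using c(2) \<open>\<not> f a\<close> by simp
      qed
    qed
    then show ?thesis using False by simp
  qed
qed

lemma mo_fx1_inj: "x < n \<Longrightarrow> inj_on (\<lambda>a. if f a then a else a(x:=True)) (min_ones n (fx f x True))"
proof (rule inj_onI)
  fix a b assume x: "x < n" and a: "a \<in> min_ones n (fx f x True)" and b: "b \<in> min_ones n (fx f x True)"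
    and e: "(if f a then a else a(x:=True)) = (if f b then b else b(x:=True))"
  have "(if f a then a else a(x:=True))(x:=False) = a" using mo_fx_nx[OF x a]
    by (simp add: fun_upd_idem)
  moreover have "(if f b then b else b(x:=True))(x:=False) = b" using mo_fx_nx[OF x b]
    by (simp add: fun_upd_idem)
  ultimately show "a = b" using e by metis
qed

lemma extra_mz: "positive n f \<Longrightarrow> relevant n f x \<Longrightarrow> \<exists>b\<in>max_zeros n f. \<not> b x"
proof -
  assume p: "positive n f" and "relevant n f x"
  from relE[OF this] obtain a where a: "a \<in> cube n" "\<not> f (a(x:=False))" "f (a(x:=True))" "x < n"
    by blast
  obtain b where b: "b \<in> max_zeros n f" "a(x:=False) \<le> b" using ex_mz[of "a(x:=False)" n f] a by auto
  have "\<not> b x"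
  proof
    assume "b x"
    then have "a(x:=True) \<le> b" using b(2) by (auto simp: le_fun_def)
    then show False using posD[OF p, of "a(x:=True)" b] a b(1) by (auto simp: mz_iff)
  qed
  then show ?thesis using b by blast
qed

lemma I1:
  assumes p: "positive n f" and x: "relevant n f x"
  shows "r n (fx f x True) + 1 \<le> r n f"
proof -
  have xn: "x < n" using x by (simp add: relevant_def)
  define h where "h = (\<lambda>a. if f a then a else a(x:=True))"
  have "h ` min_ones n (fx f x True) \<subseteq> min_ones n f"
    unfolding h_def by (rule image_subsetI, rule mo_fx1_map[OF p xn])
  then have "card (h ` min_ones n (fx f x True)) \<le> card (min_ones n f)"
    by (rule card_mono[OF fin_mo])
  moreover have "card (h ` min_ones n (fx f x True)) = card (min_ones n (fx f x True))"
    unfolding h_def by (rule card_image[OF mo_fx1_inj[OF xn]])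
  ultimately have c1: "card (min_ones n (fx f x True)) \<le> card (min_ones n f)" by simp
  obtain b where b: "b \<in> max_zeros n f" "\<not> b x" using extra_mz[OF p x] by blast
  have "insert b (max_zeros n (fx f x True)) \<subseteq> max_zeros n f"
    using b mz_fx1_sub[OF xn] by auto
  then have "card (insert b (max_zeros n (fx f x True))) \<le> card (max_zeros n f)"
    by (rule card_mono[OF fin_mz])
  moreover have "b \<notin> max_zeros n (fx f x True)" using mz_fx_x[OF xn] b by blast
  ultimately have c2: "card (max_zeros n (fx f x True)) + 1 \<le> card (max_zeros n f)"
    using card_insert_disjoint[OF fin_mz] by simp
  show ?thesis using c1 c2 by (simp add: r_eq)
qed

lemma I0:
  assumes p: "positive n f" and x: "relevant n f x"
  shows "r n (fx f x False) + 1 \<le> r n f"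
proof -
  have xn: "x < n" using x by (simp add: relevant_def)
  have "relevant n (dual n f) x" using x rel_dual[of n f] unfolding relevant_vars_def by blast
  from I1[OF pos_dual[OF p] this] show ?thesis
    by (simp add: fx_dual[OF xn] r_dual)
qed


lemma r_pos: "1 \<le> r n f"
proof -
  have bc: "(\<lambda>_. False) \<in> cube n" by (simp add: cube_def)
  have "min_ones n f \<noteq> {} \<or> max_zeros n f \<noteq> {}"
  proof (cases "f (\<lambda>_. False)")
    case True then show ?thesis using ex_mo[OF bc, of f] by blast
  next
    case False then show ?thesis using ex_mz[OF bc, of f] by blast
  qed
  then show ?thesis unfolding r_eq using fin_mo[of n f] fin_mz[of n f]
    by (metis One_nat_def Suc_leI add_gr_0 card_gt_0_iff)
qed

lemma card_rel_fx:
  assumes "x \<in> relevant_vars n f" "relevant_vars n (fx f x c) = relevant_vars n f - {x}"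
  shows "card (relevant_vars n (fx f x c)) = card (relevant_vars n f) - 1"
  using assms by (simp add: card_Diff_singleton)

lemma L1: "positive n f \<Longrightarrow> card (relevant_vars n f) = k \<Longrightarrow> k + 1 \<le> r n f"
proof (induction k arbitrary: f)
  case 0
  then show ?case using r_pos by simp
next
  case (Suc k)
  then have ne: "relevant_vars n f \<noteq> {}" by auto
  obtain x c where x: "x \<in> relevant_vars n f" and c: "relevant_vars n (fx f x c) = relevant_vars n f - {x}"
    using key[OF Suc.prems(1) ne] by blast
  have xr: "relevant n f x" and xn: "x < n" using x by (auto simp: relevant_vars_def relevant_def)
  have pg: "positive n (fx f x c)" using pos_fx[OF Suc.prems(1) xn] .
  have "card (relevant_vars n (fx f x c)) = k" using card_rel_fx[OF x c] Suc.prems(2) by simp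
  then have ih: "k + 1 \<le> r n (fx f x c)" using Suc.IH[OF pg] by simp
  have "r n (fx f x c) + 1 \<le> r n f"
    using I1[OF Suc.prems(1) xr] I0[OF Suc.prems(1) xr] by (cases c) auto
  then show ?case using ih by simp
qed


definition outer :: "nat \<Rightarrow> ((nat\<Rightarrow>bool)\<Rightarrow>bool) \<Rightarrow> nat \<Rightarrow> bool" where
  "outer n f w \<longleftrightarrow> relevant n f w \<and> ((\<forall>a\<in>cube n. a w \<longrightarrow> f a) \<or> (\<forall>a\<in>cube n. \<not> a w \<longrightarrow> \<not> f a))"

lemma outer_dual: "outer n (dual n f) w \<longleftrightarrow> outer n f w"
proof -
  have rel: "relevant n (dual n f) w \<longleftrightarrow> relevant n f w"
    using rel_dual[of n f] unfolding relevant_vars_def by (metis mem_Collect_eq)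
  have 1: "(\<forall>a\<in>cube n. a w \<longrightarrow> dual n f a) \<longleftrightarrow> (\<forall>a\<in>cube n. \<not> a w \<longrightarrow> \<not> f a)" if wn: "w < n"
  proof
    assume h: "\<forall>a\<in>cube n. a w \<longrightarrow> dual n f a"
    show "\<forall>a\<in>cube n. \<not> a w \<longrightarrow> \<not> f a"
    proof (intro ballI impI)
      fix a assume a: "a \<in> cube n" "\<not> a w"
      have "cmp n a w" using a wn by (simp add: cmp_def)
      then have "dual n f (cmp n a)" using h by simp
      then show "\<not> f a" using a by (simp add: dual_def)
    qed
  next
    assume h: "\<forall>a\<in>cube n. \<not> a w \<longrightarrow> \<not> f a"
    show "\<forall>a\<in>cube n. a w \<longrightarrow> dual n f a"
    proof (intro ballI impI)
      fix a assume a: "a \<in> cube n" "a w"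
      have "\<not> cmp n a w" using a by (simp add: cmp_def)
      then show "dual n f a" using h by (simp add: dual_def)
    qed
  qed
  have 2: "(\<forall>a\<in>cube n. \<not> a w \<longrightarrow> \<not> dual n f a) \<longleftrightarrow> (\<forall>a\<in>cube n. a w \<longrightarrow> f a)" if wn: "w < n"
  proof
    assume h: "\<forall>a\<in>cube n. \<not> a w \<longrightarrow> \<not> dual n f a"
    show "\<forall>a\<in>cube n. a w \<longrightarrow> f a"
    proof (intro ballI impI)
      fix a assume a: "a \<in> cube n" "a w"
      have "\<not> cmp n a w" using a wn by (simp add: cmp_def)
      then have "\<not> dual n f (cmp n a)" using h by simp
      then show "f a" using a by (simp add: dual_def)
    qed
  next
    assume h: "\<forall>a\<in>cube n. a w \<longrightarrow> f a"
    show "\<forall>a\<in>cube n. \<not> a w \<longrightarrow> \<not> dual n f a"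
    proof (intro ballI impI)
      fix a assume a: "a \<in> cube n" "\<not> a w"
      have "cmp n a w" using a wn by (simp add: cmp_def)
      then show "\<not> dual n f a" using h by (simp add: dual_def)
    qed
  qed
  show ?thesis
  proof (cases "w < n")
    case True
    then show ?thesis unfolding outer_def using rel 1[OF True] 2[OF True] by blast
  next
    case False
    then show ?thesis by (simp add: outer_def relevant_def)
  qed
qed

lemma const_aux: "relevant_vars n f = {} \<Longrightarrow> \<forall>a\<in>cube n. (\<forall>i\<ge>m. \<not> a i) \<longrightarrow> f a = f (\<lambda>_. False)"
proof (induction m)
  case 0
  then show ?case by (simp add: fun_eq_iff)
next
  case (Suc m)
  show ?case
  proof (intro ballI impI)
    fix a assume a: "a \<in> cube n" "\<forall>i\<ge>Suc m. \<not> a i"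
    have a': "a(m:=False) \<in> cube n" "\<forall>i\<ge>m. \<not> (a(m:=False)) i"
      using a by (auto simp: cube_def)
    have e: "f (a(m:=False)) = f (\<lambda>_. False)" using Suc.IH[OF Suc.prems] a' by blast
    show "f a = f (\<lambda>_. False)"
    proof (cases "m < n")
      case True
      have "f (a(m:=False)) = f (a(m:=True))"
        using relI[OF a(1) True, of f] Suc.prems by blast
      moreover have "a = a(m:=False) \<or> a = a(m:=True)" by (cases "a m") (simp_all add: fun_upd_idem)
      ultimately show ?thesis using e by metis
    next
      case False
      then have "\<not> a m" using a(1) by (simp add: cube_def)
      then have "a = a(m:=False)" by (simp add: fun_upd_idem)
      then show ?thesis using e by simp
    qed
  qed
qed

lemma const: "relevant_vars n f = {} \<Longrightarrow> a \<in> cube n \<Longrightarrow> f a = f (\<lambda>_. False)"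
proof -
  assume r: "relevant_vars n f = {}" and a: "a \<in> cube n"
  have "\<forall>i\<ge>n. \<not> a i" using a by (simp add: cube_def)
  then show ?thesis using const_aux[OF r, of n] a by blast
qed

lemma L2core:
  assumes p: "positive n h" and x: "x \<in> relevant_vars n h"
    and c: "relevant_vars n (fx h x True) = relevant_vars n h - {x}"
    and eq: "r n h = r n (fx h x True) + 1"
    and IHg: "relevant_vars n (fx h x True) = {} \<or> (\<exists>w. outer n (fx h x True) w)"
  shows "\<exists>w. outer n h w"
proof -
  define g where "g = fx h x True"
  have xr: "relevant n h x" and xn: "x < n" using x by (auto simp: relevant_vars_def relevant_def)
  define hh where "hh = (\<lambda>a. if h a then a else a(x:=True))"
  have sub1: "hh ` min_ones n g \<subseteq> min_ones n h"
    unfolding hh_def g_def by (rule image_subsetI, rule mo_fx1_map[OF p xn])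
  have ci: "card (hh ` min_ones n g) = card (min_ones n g)"
    unfolding hh_def g_def by (rule card_image[OF mo_fx1_inj[OF xn]])
  have c1: "card (hh ` min_ones n g) \<le> card (min_ones n h)" by (rule card_mono[OF fin_mo sub1])
  obtain b where b: "b \<in> max_zeros n h" "\<not> b x" using extra_mz[OF p xr] by blast
  have sub2: "insert b (max_zeros n g) \<subseteq> max_zeros n h"
    using b mz_fx1_sub[OF xn] by (auto simp: g_def)
  have bn: "b \<notin> max_zeros n g" using mz_fx_x[OF xn] b unfolding g_def by blast
  have c2: "card (insert b (max_zeros n g)) \<le> card (max_zeros n h)" by (rule card_mono[OF fin_mz sub2])
  have ci2: "card (insert b (max_zeros n g)) = card (max_zeros n g) + 1"
    using card_insert_disjoint[OF fin_mz bn] by simp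
  have eq2: "card (min_ones n h) + card (max_zeros n h) = card (min_ones n g) + card (max_zeros n g) + 1"
    using eq unfolding r_eq g_def by simp
  have "card (hh ` min_ones n g) = card (min_ones n h)" using c1 c2 ci ci2 eq2 by linarith
  then have E1': "hh ` min_ones n g = min_ones n h" using card_subset_eq[OF fin_mo sub1] by blast
  have "card (insert b (max_zeros n g)) = card (max_zeros n h)" using c1 c2 ci ci2 eq2 by linarith
  then have E2': "insert b (max_zeros n g) = max_zeros n h" using card_subset_eq[OF fin_mz sub2] by blast
  have bc: "b \<in> cube n" and hb: "\<not> h b" using b by (auto simp: mz_iff)
  have E2: "a \<le> b" if a: "a \<in> cube n" "\<not> a x" "\<not> h a" "h (a(x:=True))" for a
  proof -
    obtain b' where b': "b' \<in> max_zeros n h" "a \<le> b'" using ex_mz[of a n h] a by blast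
    show ?thesis
    proof (cases "b' \<in> max_zeros n g")
      case True
      then have "b' x" using mz_fx_x[OF xn] unfolding g_def by blast
      then have "a(x:=True) \<le> b'" using b'(2) by (auto simp: le_fun_def)
      moreover have "b' \<in> cube n" "\<not> h b'" using b'(1) by (auto simp: mz_iff)
      ultimately show ?thesis using posD[OF p, of "a(x:=True)" b'] a xn by simp
    next
      case False
      then have "b' = b" using E2' b'(1) by blast
      then show ?thesis using b'(2) by simp
    qed
  qed
  have E1: "m \<in> min_ones n g" if m: "m \<in> min_ones n h" "\<not> m x" for m
  proof -
    obtain a where a: "a \<in> min_ones n g" "m = hh a" using E1' m(1) by blast
    show ?thesis
    proof (cases "h a")
      case True then show ?thesis using a by (simp add: hh_def)
    next
      case False then have "m = a(x:=True)" using a by (simp add: hh_def)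
      then show ?thesis using m(2) by simp
    qed
  qed
  show ?thesis
  proof (cases "relevant_vars n g = {}")
    case True
    have r0: "relevant_vars n (fx h x False) = {}" using rel_fx[OF xn, of h False] c True
      unfolding g_def by blast
    obtain a where a: "a \<in> cube n" "\<not> h (a(x:=False))" "h (a(x:=True))" using relE[OF p xr] by blast
    have "\<not> h a'" if a': "a' \<in> cube n" "\<not> a' x" for a'
    proof -
      have "fx h x False a' = fx h x False a" using const[OF r0 a'(1)] const[OF r0 a(1)] by simp
      moreover have "a'(x:=False) = a'" using a'(2) by (simp add: fun_upd_idem)
      ultimately show ?thesis using a by (simp add: fx_def)
    qed
    then have "outer n h x" using xr by (simp add: outer_def)
    then show ?thesis by blast
  next
    case False
    then obtain w where w: "outer n g w" using IHg unfolding g_def by blast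
    have wg: "relevant n g w" using w by (simp add: outer_def)
    then have "w \<in> relevant_vars n h - {x}" using c unfolding g_def relevant_vars_def by blast
    then have wh: "relevant n h w" and wx: "w \<noteq> x" and wn: "w < n"
      by (auto simp: relevant_vars_def relevant_def)
    have gdef: "g a = h (a(x:=True))" for a by (simp add: g_def fx_def)
    show ?thesis
    proof (cases "\<forall>a\<in>cube n. \<not> a w \<longrightarrow> \<not> g a")
      case True
      have "\<not> h a" if a: "a \<in> cube n" "\<not> a w" for a
      proof
        assume "h a"
        then have "h (a(x:=True))" using posD[OF p a(1) _ upd_le(2)[of a x]] a xn by simp
        then show False using True a gdef by blast
      qed
      then have "outer n h w" using wh by (simp add: outer_def)
      then show ?thesis by blast
    next
      case False
      then have gw: "\<forall>a\<in>cube n. a w \<longrightarrow> g a" using w unfolding outer_def by blast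
      define ew where "ew = (\<lambda>i. i = w)"
      have ewc: "ew \<in> cube n" using wn by (auto simp: ew_def cube_def)
      have ew_le: "ew \<le> a" if "a w" for a using that by (auto simp: ew_def le_fun_def)
      show ?thesis
      proof (cases "h ew")
        case True
        have "h a" if a: "a \<in> cube n" "a w" for a using posD[OF p ewc a(1) ew_le[of a, OF a(2)] True] .
        then have "outer n h w" using wh by (simp add: outer_def)
        then show ?thesis by blast
      next
        case hew: False
        show ?thesis
        proof (cases "\<forall>a\<in>cube n. \<not> a x \<longrightarrow> \<not> h a")
          case True
          then have "outer n h x" using xr by (simp add: outer_def)
          then show ?thesis by blast
        next
          case False
          then obtain a0 where a0: "a0 \<in> cube n" "\<not> a0 x" "h a0" by blast
          have "g ew" using gw ewc by (simp add: ew_def)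
          then have ewb: "ew \<le> b" using E2[OF ewc _ hew] wx by (simp add: ew_def gdef)
          have "\<not> a0 \<le> b" using posD[OF p a0(1) bc _ a0(3)] hb by blast
          then obtain z where z: "a0 z" "\<not> b z" by (auto simp: le_fun_def)
          have bw: "b w" using ewb by (auto simp: ew_def le_fun_def)
          have zx: "z \<noteq> x" using z a0 by blast
          have zw: "z \<noteq> w" using z bw by blast
          have zn: "z < n" using a0(1) z(1) by (simp add: cube_def) (meson not_le)
          define pz where "pz = (\<lambda>i. i = w \<or> i = z)"
          have pzc: "pz \<in> cube n" using wn zn by (auto simp: pz_def cube_def)
          have hpz: "h pz"
          proof (rule ccontr)
            assume npz: "\<not> h pz"
            have "g pz" using gw pzc by (simp add: pz_def)
            then have "pz \<le> b" using E2[OF pzc _ npz] wx zx by (simp add: pz_def gdef)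
            then show False using z(2) by (auto simp: pz_def le_fun_def)
          qed
          obtain m where m: "m \<in> min_ones n h" "m \<le> pz" using ex_mo[of pz n h, OF pzc hpz] by blast
          have mc: "m \<in> cube n" and hm: "h m" using m by (auto simp: mo_iff)
          have mx: "\<not> m x" using m(2) wx zx by (auto simp: pz_def le_fun_def)
          have mg: "m \<in> min_ones n g" using E1[OF m(1) mx] .
          have "m z"
          proof (rule ccontr)
            assume "\<not> m z"
            then have "m \<le> ew" using m(2) by (auto simp: pz_def ew_def le_fun_def)
            then show False using posD[OF p mc ewc _ hm] hew by blast
          qed
          show ?thesis
          proof (cases "m w")
            case True
            have "ew \<le> m" using ew_le[of m, OF True] .
            moreover have "g ew" using gw ewc by (simp add: ew_def)
            ultimately have "ew = m" using mg ewc unfolding mo_iff by blast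
            then show ?thesis using \<open>m z\<close> zw by (auto simp: ew_def)
          next
            case False
            define ez where "ez = (\<lambda>i. i = z)"
            have ezc: "ez \<in> cube n" using zn by (auto simp: ez_def cube_def)
            have "m \<le> ez" using m(2) False by (auto simp: pz_def ez_def le_fun_def)
            then have hez: "h ez" using posD[OF p mc ezc _ hm] by blast
            have hz: "h a" if a: "a \<in> cube n" "a z" for a
              using posD[OF p ezc a(1) _ hez] a(2) by (auto simp: ez_def le_fun_def)
            have "b(z:=False) = b" using z(2) by (simp add: fun_upd_idem)
            moreover have "h (b(z:=True))" using hz bc zn by simp
            ultimately have "z \<in> relevant_vars n h" using relI[OF bc zn, of h] hb by simp
            then have "outer n h z" using hz by (simp add: outer_def relevant_vars_def)
            then show ?thesis by blast
          qed
        qed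
      qed
    qed
  qed
qed


lemma L2step:
  assumes p: "positive n f" and ck: "card (relevant_vars n f) = Suc k" and rk: "r n f = Suc k + 1"
    and IH: "k \<noteq> 0 \<Longrightarrow> \<forall>g. positive n g \<longrightarrow> card (relevant_vars n g) = k \<longrightarrow> r n g = k + 1 \<longrightarrow> (\<exists>w. outer n g w)"
  shows "\<exists>w. outer n f w"
proof -
  have ne: "relevant_vars n f \<noteq> {}" using ck by auto
  obtain x c where x: "x \<in> relevant_vars n f" and c: "relevant_vars n (fx f x c) = relevant_vars n f - {x}"
    using key[OF p ne] by blast
  have xr: "relevant n f x" and xn: "x < n" using x by (auto simp: relevant_vars_def relevant_def)
  define g where "g = fx f x c"
  have pg: "positive n g" using pos_fx[OF p xn] by (simp add: g_def)
  have cg: "card (relevant_vars n g) = k" using card_rel_fx[OF x c] ck by (simp add: g_def)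
  have l1: "k + 1 \<le> r n g" using L1[OF pg cg] .
  have "r n g + 1 \<le> r n f" using I1[OF p xr] I0[OF p xr] by (cases c) (auto simp: g_def)
  then have rg: "r n f = r n g + 1" using l1 rk by simp
  have IHg: "relevant_vars n g = {} \<or> (\<exists>w. outer n g w)"
  proof (cases "k = 0")
    case True then show ?thesis using cg fin_rel[of n g] by simp
  next
    case False then show ?thesis using IH pg cg rg rk by simp
  qed
  show ?thesis
  proof (cases c)
    case True
    then show ?thesis using L2core[OF p x] c rg IHg by (simp add: g_def)
  next
    case False
    have x': "x \<in> relevant_vars n (dual n f)" using x by (simp add: rel_dual)
    have e: "fx (dual n f) x True = dual n g" using fx_dual[OF xn, of f True] False by (simp add: g_def)
    have c': "relevant_vars n (fx (dual n f) x True) = relevant_vars n (dual n f) - {x}"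
      using c False by (simp add: e rel_dual g_def)
    have r': "r n (dual n f) = r n (fx (dual n f) x True) + 1" using rg by (simp add: e r_dual)
    have IHg': "relevant_vars n (fx (dual n f) x True) = {} \<or> (\<exists>w. outer n (fx (dual n f) x True) w)"
      using IHg by (simp add: e rel_dual outer_dual)
    obtain w where "outer n (dual n f) w" using L2core[OF pos_dual[OF p] x' c' r' IHg'] by blast
    then show ?thesis using outer_dual by blast
  qed
qed

lemma L2: "\<forall>f. positive n f \<longrightarrow> card (relevant_vars n f) = Suc k \<longrightarrow> r n f = Suc k + 1 \<longrightarrow> (\<exists>w. outer n f w)"
proof (induction k)
  case 0
  then show ?case using L2step[of n _ 0] by blast
next
  case (Suc k)
  show ?case
  proof (intro allI impI)
    fix f assume "positive n f" "card (relevant_vars n f) = Suc (Suc k)" "r n f = Suc (Suc k) + 1"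
    then show "\<exists>w. outer n f w" using L2step[of n f "Suc k"] Suc.IH by blast
  qed
qed


lemma neval_indep: "v \<notin> nvars \<phi> \<Longrightarrow> neval \<phi> (a(v:=c)) = neval \<phi> a"
  by (induction \<phi>) auto

lemma neval_both: "nested_ok \<phi> \<Longrightarrow> nvars \<phi> \<subseteq> {..<n} \<Longrightarrow> \<exists>a\<in>cube n. neval \<phi> a = b"
proof (induction \<phi> arbitrary: b)
  case (NLit v p)
  then have vn: "v < n" by simp
  have "(\<lambda>i. i = v \<and> (p = b)) \<in> cube n" using vn by (auto simp: cube_def)
  moreover have "neval (NLit v p) (\<lambda>i. i = v \<and> (p = b)) = b" by auto
  ultimately show ?case by blast
next
  case (NOr w p t)
  then have wn: "w < n" and wt: "w \<notin> nvars t" and ok: "nested_ok t" and tv: "nvars t \<subseteq> {..<n}" by auto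
  show ?case
  proof (cases b)
    case True
    have "(\<lambda>i. i = w \<and> p) \<in> cube n" using wn by (auto simp: cube_def)
    moreover have "neval (NOr w p t) (\<lambda>i. i = w \<and> p)" by auto
    ultimately show ?thesis using True by blast
  next
    case False
    obtain a where a: "a \<in> cube n" "neval t a = False" using NOr.IH[OF ok tv] by blast
    have "a(w:=\<not>p) \<in> cube n" using a wn by simp
    moreover have "neval (NOr w p t) (a(w:=\<not>p)) = False" using a neval_indep[OF wt] by auto
    ultimately show ?thesis using False by blast
  qed
next
  case (NAnd w p t)
  then have wn: "w < n" and wt: "w \<notin> nvars t" and ok: "nested_ok t" and tv: "nvars t \<subseteq> {..<n}" by auto
  show ?case
  proof (cases b)
    case False
    have "(\<lambda>i. i = w \<and> \<not> p) \<in> cube n" using wn by (auto simp: cube_def)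
    moreover have "\<not> neval (NAnd w p t) (\<lambda>i. i = w \<and> \<not> p)" by auto
    ultimately show ?thesis using False by blast
  next
    case True
    obtain a where a: "a \<in> cube n" "neval t a = True" using NAnd.IH[OF ok tv] by blast
    have "a(w:=p) \<in> cube n" using a wn by simp
    moreover have "neval (NAnd w p t) (a(w:=p)) = True" using a neval_indep[OF wt] by auto
    ultimately show ?thesis using True by blast
  qed
qed

lemma nvar_rel: "nested_ok \<phi> \<Longrightarrow> nvars \<phi> \<subseteq> {..<n} \<Longrightarrow> v \<in> nvars \<phi> \<Longrightarrow>
  \<exists>a\<in>cube n. neval \<phi> (a(v:=False)) \<noteq> neval \<phi> (a(v:=True))"
proof (induction \<phi>)
  case (NLit w p)
  have "(\<lambda>_. False) \<in> cube n" by (simp add: cube_def)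
  then show ?case using NLit by (intro bexI[of _ "\<lambda>_. False"]) auto
next
  case (NOr w p t)
  then have wn: "w < n" and wt: "w \<notin> nvars t" and ok: "nested_ok t" and tv: "nvars t \<subseteq> {..<n}" by auto
  show ?case
  proof (cases "v = w")
    case True
    obtain a where a: "a \<in> cube n" "neval t a = False" using neval_both[OF ok tv] by blast
    have e1: "neval t (a(w:=False)) = neval t a" and e2: "neval t (a(w:=True)) = neval t a"
      using neval_indep[OF wt] by blast+
    show ?thesis using a by (intro bexI[of _ a]) (simp only: neval.simps e1 e2 True, simp)
  next
    case False
    then have vt: "v \<in> nvars t" using NOr.prems by simp
    obtain a where a: "a \<in> cube n" "neval t (a(v:=False)) \<noteq> neval t (a(v:=True))"
      using NOr.IH[OF ok tv vt] by blast
    have e: "a(w:=\<not>p, v:=c) = (a(v:=c))(w:=\<not>p)" for c using False by (simp add: fun_upd_twist)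
    have "neval (NOr w p t) (a(w:=\<not>p, v:=False)) \<noteq> neval (NOr w p t) (a(w:=\<not>p, v:=True))"
      using a(2) False by (simp add: e neval_indep[OF wt])
    moreover have "a(w:=\<not>p) \<in> cube n" using a wn by simp
    ultimately show ?thesis by blast
  qed
next
  case (NAnd w p t)
  then have wn: "w < n" and wt: "w \<notin> nvars t" and ok: "nested_ok t" and tv: "nvars t \<subseteq> {..<n}" by auto
  show ?case
  proof (cases "v = w")
    case True
    obtain a where a: "a \<in> cube n" "neval t a = True" using neval_both[OF ok tv] by blast
    have e1: "neval t (a(w:=False)) = neval t a" and e2: "neval t (a(w:=True)) = neval t a"
      using neval_indep[OF wt] by blast+
    show ?thesis using a by (intro bexI[of _ a]) (simp only: neval.simps e1 e2 True, simp)
  next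
    case False
    then have vt: "v \<in> nvars t" using NAnd.prems by simp
    obtain a where a: "a \<in> cube n" "neval t (a(v:=False)) \<noteq> neval t (a(v:=True))"
      using NAnd.IH[OF ok tv vt] by blast
    have e: "a(w:=p, v:=c) = (a(v:=c))(w:=p)" for c using False by (simp add: fun_upd_twist)
    have "neval (NAnd w p t) (a(w:=p, v:=False)) \<noteq> neval (NAnd w p t) (a(w:=p, v:=True))"
      using a(2) False by (simp add: e neval_indep[OF wt])
    moreover have "a(w:=p) \<in> cube n" using a wn by simp
    ultimately show ?thesis by blast
  qed
qed

fun ndual :: "nformula \<Rightarrow> nformula" where
  "ndual (NLit v p) = NLit v p"
| "ndual (NOr v p t) = NAnd v p (ndual t)"
| "ndual (NAnd v p t) = NOr v p (ndual t)"

lemma nvars_ndual[simp]: "nvars (ndual \<phi>) = nvars \<phi>"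
  by (induction \<phi>) auto

lemma ok_ndual[simp]: "nested_ok (ndual \<phi>) = nested_ok \<phi>"
  by (induction \<phi>) auto

lemma neval_ndual: "nvars \<phi> \<subseteq> {..<n} \<Longrightarrow> neval (ndual \<phi>) a = (\<not> neval \<phi> (cmp n a))"
  by (induction \<phi>) (auto simp: cmp_def)

lemma lro_dual: "lro n (dual n f) \<Longrightarrow> lro n f"
proof -
  assume "lro n (dual n f)"
  then consider (c) c where "\<forall>x\<in>cube n. dual n f x = c"
    | (phi) \<phi> where "nested_ok \<phi>" "nvars \<phi> \<subseteq> {..<n}" "\<forall>x\<in>cube n. dual n f x = neval \<phi> x"
    unfolding lro_def by blast
  then show ?thesis
  proof cases
    case c
    have "f x = (\<not> c)" if "x \<in> cube n" for x
    proof -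
      have "dual n f (cmp n x) = c" using c by simp
      then show ?thesis using that by (simp add: dual_def) metis
    qed
    then show ?thesis unfolding lro_def by blast
  next
    case phi
    have "f x = neval (ndual \<phi>) x" if x: "x \<in> cube n" for x
    proof -
      have "dual n f (cmp n x) = neval \<phi> (cmp n x)" using phi(3) by simp
      then have "(\<not> f x) = neval \<phi> (cmp n x)" using x by (simp add: dual_def)
      moreover have "neval (ndual \<phi>) x = (\<not> neval \<phi> (cmp n x))" by (rule neval_ndual[OF phi(2)])
      ultimately show ?thesis by metis
    qed
    moreover have "nested_ok (ndual \<phi>)" "nvars (ndual \<phi>) \<subseteq> {..<n}" using phi by simp_all
    ultimately show ?thesis unfolding lro_def by blast
  qed
qed

lemma dual_up: "v < n \<Longrightarrow> \<forall>a\<in>cube n. \<not> a v \<longrightarrow> \<not> f a \<Longrightarrow> \<forall>a\<in>cube n. a v \<longrightarrow> dual n f a"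
proof (intro ballI impI)
  fix a assume v: "v < n" and h: "\<forall>a\<in>cube n. \<not> a v \<longrightarrow> \<not> f a" and a: "a \<in> cube n" "a v"
  have "\<not> cmp n a v" using a by (simp add: cmp_def)
  then show "dual n f a" using h by (simp add: dual_def)
qed


lemma rel_out:
  assumes h: "\<forall>a\<in>cube n. a v = c \<longrightarrow> f a = d" and v: "relevant n f v"
  shows "relevant_vars n (fx f v (\<not> c)) = relevant_vars n f - {v}"
    and "card (relevant_vars n f) = card (relevant_vars n (fx f v (\<not> c))) + 1"
proof -
  have vn: "v < n" using v by (simp add: relevant_def)
  show e: "relevant_vars n (fx f v (\<not> c)) = relevant_vars n f - {v}"
    using keep[OF h vn] rel_fx[OF vn, of f "\<not> c"] by blast
  have vr: "v \<in> relevant_vars n f" using v by (simp add: relevant_vars_def)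
  then have "card (relevant_vars n f) \<ge> 1" using fin_rel[of n f]
    by (metis One_nat_def Suc_leI card_gt_0_iff empty_iff)
  then show "card (relevant_vars n f) = card (relevant_vars n (fx f v (\<not> c))) + 1"
    using e vr by (simp add: card_Diff_singleton)
qed

lemma L3one:
  assumes p: "positive n h" and ck: "card (relevant_vars n h) = Suc k" and rk: "r n h = Suc k + 1"
    and wh: "relevant n h w" and up: "\<forall>a\<in>cube n. a w \<longrightarrow> h a"
    and IH: "\<And>g. positive n g \<Longrightarrow> card (relevant_vars n g) = k \<Longrightarrow> r n g = k + 1 \<Longrightarrow> lro n g"
  shows "lro n h"
proof -
  have wn: "w < n" using wh by (simp add: relevant_def)
  define g where "g = fx h w False"
  have up': "\<forall>a\<in>cube n. a w = True \<longrightarrow> h a = True" using up by simp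
  have relg: "relevant_vars n g = relevant_vars n h - {w}" using rel_out(1)[OF up' wh] by (simp add: g_def)
  have cg: "card (relevant_vars n g) = k" using rel_out(2)[OF up' wh] ck by (simp add: g_def)
  have pg: "positive n g" using pos_fx[OF p wn] by (simp add: g_def)
  have "r n g + 1 \<le> r n h" using I0[OF p wh] by (simp add: g_def)
  moreover have "k + 1 \<le> r n g" using L1[OF pg cg] .
  ultimately have "r n g = k + 1" using rk by simp
  then have lg: "lro n g" using IH[OF pg cg] by simp
  have hv: "h a = (a w \<or> g a)" if a: "a \<in> cube n" for a
  proof (cases "a w")
    case True then show ?thesis using up a by simp
  next
    case False then have "a(w:=False) = a" by (simp add: fun_upd_idem)
    then show ?thesis using False by (simp add: g_def fx_def)
  qed
  obtain a0 where a0: "a0 \<in> cube n" "\<not> h (a0(w:=False))" "h (a0(w:=True))" using relE[OF p wh] by blast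
  from lg consider (c) c where "\<forall>x\<in>cube n. g x = c"
    | (phi) \<phi> where "nested_ok \<phi>" "nvars \<phi> \<subseteq> {..<n}" "\<forall>x\<in>cube n. g x = neval \<phi> x"
    unfolding lro_def by blast
  then show ?thesis
  proof cases
    case c
    have "g (a0(w:=False)) = c" using c a0(1) wn by simp
    moreover have "\<not> g (a0(w:=False))" using hv[of "a0(w:=False)"] a0 wn by simp
    ultimately have nc: "\<not> c" by simp
    have "h x = neval (NLit w True) x" if "x \<in> cube n" for x using hv[OF that] c that nc by simp
    moreover have "nested_ok (NLit w True)" "nvars (NLit w True) \<subseteq> {..<n}" using wn by simp_all
    ultimately show ?thesis unfolding lro_def by blast
  next
    case phi
    have wp: "w \<notin> nvars \<phi>"
    proof
      assume "w \<in> nvars \<phi>"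
      then obtain a where a: "a \<in> cube n" "neval \<phi> (a(w:=False)) \<noteq> neval \<phi> (a(w:=True))"
        using nvar_rel[OF phi(1,2)] by blast
      have "g (a(w:=False)) = g (a(w:=True))" by (simp add: g_def fx_def)
      then show False using a phi(3) wn by simp
    qed
    have "h x = neval (NOr w True \<phi>) x" if "x \<in> cube n" for x using hv[OF that] phi(3) that by simp
    moreover have "nested_ok (NOr w True \<phi>)" "nvars (NOr w True \<phi>) \<subseteq> {..<n}" using wn wp phi by simp_all
    ultimately show ?thesis unfolding lro_def by blast
  qed
qed

lemma L3: "positive n f \<Longrightarrow> card (relevant_vars n f) = k \<Longrightarrow> r n f = k + 1 \<Longrightarrow> lro n f"
proof (induction k arbitrary: f)
  case 0
  then have "relevant_vars n f = {}" using fin_rel[of n f] by simp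
  then have "\<forall>x\<in>cube n. f x = f (\<lambda>_. False)" using const by blast
  then show ?case unfolding lro_def by blast
next
  case (Suc k)
  obtain w where w: "outer n f w" using L2 Suc.prems by blast
  have wr: "relevant n f w" and wn: "w < n" using w by (auto simp: outer_def relevant_def)
  consider (up) "\<forall>a\<in>cube n. a w \<longrightarrow> f a" | (dn) "\<forall>a\<in>cube n. \<not> a w \<longrightarrow> \<not> f a"
    using w unfolding outer_def by blast
  then show ?case
  proof cases
    case up
    then show ?thesis using L3one[OF Suc.prems(1,2,3) wr up Suc.IH] by blast
  next
    case dn
    have "relevant n (dual n f) w" using wr rel_dual[of n f] unfolding relevant_vars_def by blast
    moreover have "card (relevant_vars n (dual n f)) = Suc k" using Suc.prems by (simp add: rel_dual)
    moreover have "r n (dual n f) = Suc k + 1" using Suc.prems by (simp add: r_dual)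
    ultimately have "lro n (dual n f)"
      using L3one[OF pos_dual[OF Suc.prems(1)], of k w] dual_up[OF wn dn] Suc.IH by blast
    then show ?thesis by (rule lro_dual)
  qed
qed


lemma U:
  assumes up: "\<forall>a\<in>cube n. a v \<longrightarrow> f a" and vn: "v < n"
  shows "r n f \<le> r n (fx f v False) + 1"
proof -
  define g where "g = fx f v False"
  define ev where "ev = (\<lambda>i. i = v)"
  have evc: "ev \<in> cube n" using vn by (auto simp: ev_def cube_def)
  have fev: "f ev" using up evc by (simp add: ev_def)
  have sub1: "min_ones n f \<subseteq> insert ev (min_ones n g)"
  proof
    fix m assume m: "m \<in> min_ones n f"
    have mc: "m \<in> cube n" and fm: "f m" and mmin: "\<forall>y\<in>cube n. f y \<and> y \<le> m \<longrightarrow> y = m"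
      using m by (auto simp: mo_iff)
    show "m \<in> insert ev (min_ones n g)"
    proof (cases "m v")
      case True
      have "ev \<le> m" using True by (auto simp: ev_def le_fun_def)
      then have "ev = m" using mmin evc fev by blast
      then show ?thesis by simp
    next
      case False
      have mm: "m(v:=False) = m" using False by (simp add: fun_upd_idem)
      have "m \<in> min_ones n g" unfolding mo_iff
      proof (intro conjI ballI impI)
        show "m \<in> cube n" by (rule mc)
        show "g m" using fm mm by (simp add: g_def fx_def)
        fix y assume y: "y \<in> cube n" "g y \<and> y \<le> m"
        have "y(v:=False) \<le> m" using y(2) by (auto simp: le_fun_def)
        moreover have "f (y(v:=False))" using y by (simp add: g_def fx_def)
        moreover have "y(v:=False) \<in> cube n" using y vn by simp
        ultimately have "y(v:=False) = m" using mmin by blast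
        moreover have "\<not> y v" using y(2) False by (auto simp: le_fun_def)
        ultimately show "y = m" by (simp add: fun_upd_idem)
      qed
      then show ?thesis by simp
    qed
  qed
  have c1: "card (min_ones n f) \<le> card (min_ones n g) + 1"
  proof -
    have "card (min_ones n f) \<le> card (insert ev (min_ones n g))"
      by (rule card_mono) (simp_all add: fin_mo sub1)
    also have "\<dots> \<le> card (min_ones n g) + 1" by (simp add: card_insert_if fin_mo)
    finally show ?thesis .
  qed
  have nx: "\<not> b v" if "b \<in> max_zeros n f" for b
  proof
    assume "b v"
    moreover have "b \<in> cube n" "\<not> f b" using that by (simp_all add: mz_iff)
    ultimately show False using up by blast
  qed
  have sub2: "(\<lambda>b. b(v:=True)) ` max_zeros n f \<subseteq> max_zeros n g"
  proof (rule image_subsetI)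
    fix b assume b: "b \<in> max_zeros n f"
    have bc: "b \<in> cube n" and fb: "\<not> f b" and bmax: "\<forall>y\<in>cube n. \<not> f y \<and> b \<le> y \<longrightarrow> y = b"
      using b by (auto simp: mz_iff)
    have bv: "\<not> b v" using nx[OF b] .
    have bb: "b(v:=True, v:=False) = b" using bv by (simp add: fun_upd_idem)
    show "b(v:=True) \<in> max_zeros n g" unfolding mz_iff
    proof (intro conjI ballI impI)
      show "b(v:=True) \<in> cube n" using bc vn by simp
      show "\<not> g (b(v:=True))" using fb bb by (simp add: g_def fx_def)
      fix y assume y: "y \<in> cube n" "\<not> g y \<and> b(v:=True) \<le> y"
      have "b \<le> y(v:=False)" using y(2) bv by (auto simp: le_fun_def)
      moreover have "\<not> f (y(v:=False))" using y by (simp add: g_def fx_def)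
      moreover have "y(v:=False) \<in> cube n" using y vn by simp
      ultimately have yb: "y(v:=False) = b" using bmax by blast
      have yv: "y v" using y(2) by (auto simp: le_fun_def)
      have "(y(v:=False))(v:=True) = b(v:=True)" using yb by (rule arg_cong)
      moreover have "(y(v:=False))(v:=True) = y" using yv by (simp add: fun_eq_iff)
      ultimately show "y = b(v:=True)" by simp
    qed
  qed
  have inj: "inj_on (\<lambda>b. b(v:=True)) (max_zeros n f)"
  proof (rule inj_onI)
    fix a b assume a: "a \<in> max_zeros n f" and b: "b \<in> max_zeros n f" and e: "a(v:=True) = b(v:=True)"
    have "(a(v:=True))(v:=False) = (b(v:=True))(v:=False)" using e by (rule arg_cong)
    moreover have "(a(v:=True))(v:=False) = a" using nx[OF a] by (simp add: fun_eq_iff)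
    moreover have "(b(v:=True))(v:=False) = b" using nx[OF b] by (simp add: fun_eq_iff)
    ultimately show "a = b" by simp
  qed
  have c2: "card (max_zeros n f) \<le> card (max_zeros n g)"
    using card_mono[OF fin_mz sub2] card_image[OF inj] by simp
  show ?thesis using c1 c2 by (simp add: r_eq g_def)
qed

lemma U0:
  assumes dn: "\<forall>a\<in>cube n. \<not> a v \<longrightarrow> \<not> f a" and vn: "v < n"
  shows "r n f \<le> r n (fx f v True) + 1"
  using U[OF dual_up[OF vn dn] vn] by (simp add: fx_dual[OF vn] r_dual)

lemma r_const: "\<forall>a\<in>cube n. f a = c \<Longrightarrow> r n f \<le> 1"
proof -
  assume h: "\<forall>a\<in>cube n. f a = c"
  show ?thesis
  proof (cases c)
    case True
    have "max_zeros n f = {}" using h True by (auto simp: mz_iff)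
    moreover have "min_ones n f \<subseteq> {\<lambda>_. False}"
    proof
      fix m assume m: "m \<in> min_ones n f"
      have "(\<lambda>_. False) \<in> cube n" by (simp add: cube_def)
      moreover have "(\<lambda>_. False) \<le> m" by (simp add: le_fun_def)
      ultimately have "(\<lambda>_. False) = m" using m h True unfolding mo_iff by blast
      then show "m \<in> {\<lambda>_. False}" by simp
    qed
    ultimately show ?thesis unfolding r_eq using card_mono[of "{\<lambda>_. False}" "min_ones n f"] by simp
  next
    case False
    have "min_ones n f = {}" using h False by (auto simp: mo_iff)
    moreover have "max_zeros n f \<subseteq> {\<lambda>i. i < n}"
    proof
      fix m assume m: "m \<in> max_zeros n f"
      have "(\<lambda>i. i < n) \<in> cube n" by (simp add: cube_def)
      moreover have "m \<le> (\<lambda>i. i < n)" using m by (auto simp: mz_iff cube_def le_fun_def)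
      ultimately have "(\<lambda>i. i < n) = m" using m h False unfolding mz_iff by blast
      then show "m \<in> {\<lambda>i. i < n}" by simp
    qed
    ultimately show ?thesis unfolding r_eq using card_mono[of "{\<lambda>i. i < n}" "max_zeros n f"] by simp
  qed
qed


lemma L4: "nested_ok \<phi> \<Longrightarrow> nvars \<phi> \<subseteq> {..<n} \<Longrightarrow> positive n f \<Longrightarrow> \<forall>a\<in>cube n. f a = neval \<phi> a
  \<Longrightarrow> r n f \<le> card (relevant_vars n f) + 1"
proof (induction \<phi> arbitrary: f)
  case (NLit v p)
  have vn: "v < n" using NLit by simp
  define bot where "bot = (\<lambda>_::nat. False)"
  have botc: "bot \<in> cube n" by (simp add: bot_def cube_def)
  have fv: "f a = lit_val a v p" if "a \<in> cube n" for a using NLit.prems(4) that by simp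
  have pp: p
  proof (rule ccontr)
    assume np: "\<not> p"
    have "f bot" using fv[OF botc] np by (simp add: bot_def)
    moreover have "\<not> f (bot(v:=True))" using fv[of "bot(v:=True)"] botc vn np by simp
    moreover have "bot \<le> bot(v:=True)" by (simp add: bot_def le_fun_def)
    ultimately show False using posD[OF NLit.prems(3) botc, of "bot(v:=True)"] botc vn by simp
  qed
  have up: "\<forall>a\<in>cube n. a v = True \<longrightarrow> f a = True" using fv pp by simp
  have "f (bot(v:=False)) \<noteq> f (bot(v:=True))" using fv[of "bot(v:=False)"] fv[of "bot(v:=True)"] botc vn pp
    by (simp add: bot_def)
  then have vr: "relevant n f v" using relI[OF botc vn] by (simp add: relevant_vars_def)
  define g where "g = fx f v False"
  have "\<forall>a\<in>cube n. g a = False" using fv pp vn by (simp add: g_def fx_def)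
  then have "r n g \<le> 1" by (rule r_const)
  moreover have "r n f \<le> r n g + 1" using U[of n v f] up vn by (simp add: g_def)
  moreover have "card (relevant_vars n f) = card (relevant_vars n g) + 1"
    using rel_out(2)[OF up vr] by (simp add: g_def)
  ultimately show ?case by simp
next
  case (NOr v p t)
  have vn: "v < n" and wt: "v \<notin> nvars t" and ok: "nested_ok t" and tv: "nvars t \<subseteq> {..<n}"
    using NOr.prems by auto
  have fv: "f a = (lit_val a v p \<or> neval t a)" if "a \<in> cube n" for a using NOr.prems(4) that by simp
  obtain a0 where a0: "a0 \<in> cube n" "neval t a0 = False" using neval_both[OF ok tv] by blast
  have t0: "neval t (a0(v:=c)) = False" for c using a0 neval_indep[OF wt] by simp
  have pp: p
  proof (rule ccontr)
    assume np: "\<not> p"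
    have "f (a0(v:=False))" using fv[of "a0(v:=False)"] a0 vn np by simp
    moreover have "\<not> f (a0(v:=True))" using fv[of "a0(v:=True)"] a0 vn np t0 by simp
    moreover have "a0(v:=False) \<le> a0(v:=True)" by (simp add: le_fun_def)
    ultimately show False using posD[OF NOr.prems(3), of "a0(v:=False)" "a0(v:=True)"] a0 vn
      by (simp del: fun_upd_apply)
  qed
  have up: "\<forall>a\<in>cube n. a v = True \<longrightarrow> f a = True" using fv pp by simp
  have "f (a0(v:=False)) \<noteq> f (a0(v:=True))" using fv[of "a0(v:=False)"] fv[of "a0(v:=True)"] a0 vn pp t0
    by simp
  then have vr: "relevant n f v" using relI[OF a0(1) vn] by (simp add: relevant_vars_def)
  define g where "g = fx f v False"
  have gv: "\<forall>a\<in>cube n. g a = neval t a" using fv pp vn neval_indep[OF wt] by (simp add: g_def fx_def)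
  have pg: "positive n g" using pos_fx[OF NOr.prems(3) vn] by (simp add: g_def)
  have "r n g \<le> card (relevant_vars n g) + 1" using NOr.IH[OF ok tv pg gv] .
  moreover have "r n f \<le> r n g + 1" using U[of n v f] up vn by (simp add: g_def)
  moreover have "card (relevant_vars n f) = card (relevant_vars n g) + 1"
    using rel_out(2)[OF up vr] by (simp add: g_def)
  ultimately show ?case by simp
next
  case (NAnd v p t)
  have vn: "v < n" and wt: "v \<notin> nvars t" and ok: "nested_ok t" and tv: "nvars t \<subseteq> {..<n}"
    using NAnd.prems by auto
  have fv: "f a = (lit_val a v p \<and> neval t a)" if "a \<in> cube n" for a using NAnd.prems(4) that by simp
  obtain a0 where a0: "a0 \<in> cube n" "neval t a0 = True" using neval_both[OF ok tv] by blast
  have t0: "neval t (a0(v:=c)) = True" for c using a0 neval_indep[OF wt] by simp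
  have pp: p
  proof (rule ccontr)
    assume np: "\<not> p"
    have "f (a0(v:=False))" using fv[of "a0(v:=False)"] a0 vn np t0 by simp
    moreover have "\<not> f (a0(v:=True))" using fv[of "a0(v:=True)"] a0 vn np by simp
    moreover have "a0(v:=False) \<le> a0(v:=True)" by (simp add: le_fun_def)
    ultimately show False using posD[OF NAnd.prems(3), of "a0(v:=False)" "a0(v:=True)"] a0 vn
      by (simp del: fun_upd_apply)
  qed
  have dn: "\<forall>a\<in>cube n. \<not> a v \<longrightarrow> \<not> f a" using fv pp by simp
  have dn': "\<forall>a\<in>cube n. a v = False \<longrightarrow> f a = False" using fv pp by simp
  have "f (a0(v:=False)) \<noteq> f (a0(v:=True))" using fv[of "a0(v:=False)"] fv[of "a0(v:=True)"] a0 vn pp t0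
    by simp
  then have vr: "relevant n f v" using relI[OF a0(1) vn] by (simp add: relevant_vars_def)
  define g where "g = fx f v True"
  have gv: "\<forall>a\<in>cube n. g a = neval t a" using fv pp vn neval_indep[OF wt] by (simp add: g_def fx_def)
  have pg: "positive n g" using pos_fx[OF NAnd.prems(3) vn] by (simp add: g_def)
  have "r n g \<le> card (relevant_vars n g) + 1" using NAnd.IH[OF ok tv pg gv] .
  moreover have "r n f \<le> r n g + 1" using U0[OF dn vn] by (simp add: g_def)
  moreover have "card (relevant_vars n f) = card (relevant_vars n g) + 1"
    using rel_out(2)[OF dn' vr] by (simp add: g_def)
  ultimately show ?case by simp
qed

theorem mainTheorem1:
  fixes n k :: nat and f :: "(nat \<Rightarrow> bool) \<Rightarrow> bool"
  assumes "positive n f"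
    and "card (relevant_vars n f) = k"
  shows "r n f \<ge> k + 1 \<and> (r n f = k + 1 \<longleftrightarrow> lro n f)"
proof -
  have lb: "k + 1 \<le> r n f" using L1[OF assms] .
  have "lro n f \<Longrightarrow> r n f \<le> k + 1"
  proof -
    assume "lro n f"
    then consider (c) c where "\<forall>x\<in>cube n. f x = c"
      | (phi) \<phi> where "nested_ok \<phi>" "nvars \<phi> \<subseteq> {..<n}" "\<forall>x\<in>cube n. f x = neval \<phi> x"
      unfolding lro_def by blast
    then show ?thesis
    proof cases
      case c then show ?thesis using r_const[OF c] by simp
    next
      case phi then show ?thesis using L4[OF phi(1,2) assms(1) phi(3)] assms(2) by simp
    qed
  qed
  moreover have "r n f = k + 1 \<Longrightarrow> lro n f" using L3[OF assms] .
  ultimately show ?thesis using lb by auto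
qed

end
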